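(* Let $G$ be a finite permutation group acting quasi-transitively on a finite set $\Omega$, with constant $t>1$, and suppose $G$ is not transitive on $\Omega$. If $G$ acts $2$-transitively on a $G$-orbit $\Delta$, then $|G|=|\Delta|(|\Delta|-1)t$. Consequently $G$ acts $2$-transitively on at most one of its orbits on $\Omega$.
   Context: A finite permutation group $G$ on a finite set $\Omega$ is called quasi-transitive if there is a natural number $t>1$ such that $|G_{\alpha\beta}|=t$ for all two-element subsets $\{\alpha,\beta\}\subseteq\Omega$, where $G_{\alpha\beta}$ denotes the pointwise stabiliser of $\alpha$ and $\beta$ in $G$. *)

theory Defs
  imports "HOL-Algebra.Bij"
begin

text \<open>A permutation group on Omega is a subgroup G of the symmetric group BijGroup Omega.\<close>

definition pw_stab2 :: "('a \<Rightarrow> 'a) set \<Rightarrow> 'a \<Rightarrow> 'a \<Rightarrow> ('a \<Rightarrow> 'a) set" where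
  "pw_stab2 G \<alpha> \<beta> = {g \<in> G. g \<alpha> = \<alpha> \<and> g \<beta> = \<beta>}"

definition quasi_transitive_with :: "('a \<Rightarrow> 'a) set \<Rightarrow> 'a set \<Rightarrow> nat \<Rightarrow> bool" where
  "quasi_transitive_with G \<Omega> t \<longleftrightarrow> t > 1 \<and>
     (\<forall>\<alpha>\<in>\<Omega>. \<forall>\<beta>\<in>\<Omega>. \<alpha> \<noteq> \<beta> \<longrightarrow> card (pw_stab2 G \<alpha> \<beta>) = t)"

definition transitive_on :: "('a \<Rightarrow> 'a) set \<Rightarrow> 'a set \<Rightarrow> bool" where
  "transitive_on G \<Omega> \<longleftrightarrow> (\<forall>\<alpha>\<in>\<Omega>. \<forall>\<beta>\<in>\<Omega>. \<exists>g\<in>G. g \<alpha> = \<beta>)"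

definition orbit_of :: "('a \<Rightarrow> 'a) set \<Rightarrow> 'a \<Rightarrow> 'a set" where
  "orbit_of G \<alpha> = (\<lambda>g. g \<alpha>) ` G"

definition is_orbit :: "('a \<Rightarrow> 'a) set \<Rightarrow> 'a set \<Rightarrow> 'a set \<Rightarrow> bool" where
  "is_orbit G \<Omega> \<Delta> \<longleftrightarrow> (\<exists>\<alpha>\<in>\<Omega>. \<Delta> = orbit_of G \<alpha>)"

definition two_transitive_on :: "('a \<Rightarrow> 'a) set \<Rightarrow> 'a set \<Rightarrow> bool" where
  "two_transitive_on G \<Delta> \<longleftrightarrow> card \<Delta> \<ge> 2 \<and>
     (\<forall>\<alpha>\<in>\<Delta>. \<forall>\<beta>\<in>\<Delta>. \<forall>\<gamma>\<in>\<Delta>. \<forall>\<delta>\<in>\<Delta>. \<alpha> \<noteq> \<beta> \<longrightarrow> \<gamma> \<noteq> \<delta> \<longrightarrow>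
        (\<exists>g\<in>G. g \<alpha> = \<gamma> \<and> g \<beta> = \<delta>))"

end

theory Submission
  imports Defs
begin

locale pg =
  fixes G :: "('a \<Rightarrow> 'a) set" and \<Omega> :: "'a set"
  assumes fin: "finite \<Omega>" and sg: "subgroup G (BijGroup \<Omega>)"
begin

abbreviation "BG \<equiv> BijGroup \<Omega>"

lemma grp: "group BG" by (rule group_BijGroup)

lemma memB: "g \<in> G \<Longrightarrow> g \<in> carrier BG"
  using subgroup.subset[OF sg] by blast

lemma memBij: "g \<in> G \<Longrightarrow> g \<in> Bij \<Omega>"
  using memB by (simp add: BijGroup_def)

lemma maps: "g \<in> G \<Longrightarrow> a \<in> \<Omega> \<Longrightarrow> g a \<in> \<Omega>"
  using memBij Bij_imp_funcset by blast

lemma injG: "g \<in> G \<Longrightarrow> a \<in> \<Omega> \<Longrightarrow> b \<in> \<Omega> \<Longrightarrow> g a = g b \<Longrightarrow> a = b"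
  using memBij by (auto simp: Bij_def bij_betw_def inj_on_def)

lemma mult_app: "g \<in> G \<Longrightarrow> h \<in> G \<Longrightarrow> a \<in> \<Omega> \<Longrightarrow> (g \<otimes>\<^bsub>BG\<^esub> h) a = g (h a)"
  using memBij by (simp add: BijGroup_def compose_def)

lemma one_app: "a \<in> \<Omega> \<Longrightarrow> \<one>\<^bsub>BG\<^esub> a = a"
  by (simp add: BijGroup_def)

lemma mclosed: "g \<in> G \<Longrightarrow> h \<in> G \<Longrightarrow> g \<otimes>\<^bsub>BG\<^esub> h \<in> G"
  by (rule subgroup.m_closed[OF sg])

lemma iclosed: "g \<in> G \<Longrightarrow> inv\<^bsub>BG\<^esub> g \<in> G"
  by (rule subgroup.m_inv_closed[OF sg])

lemma oneG: "\<one>\<^bsub>BG\<^esub> \<in> G"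
  by (rule subgroup.one_closed[OF sg])

lemma inv_app: "g \<in> G \<Longrightarrow> a \<in> \<Omega> \<Longrightarrow> (inv\<^bsub>BG\<^esub> g) (g a) = a"
proof -
  assume g: "g \<in> G" and a: "a \<in> \<Omega>"
  have "(inv\<^bsub>BG\<^esub> g \<otimes>\<^bsub>BG\<^esub> g) a = a"
    using group.l_inv[OF grp memB[OF g]] one_app[OF a] by simp
  thus ?thesis using mult_app[OF iclosed[OF g] g a] by simp
qed

lemma extG: "g \<in> G \<Longrightarrow> (\<And>a. a \<in> \<Omega> \<Longrightarrow> g a = a) \<Longrightarrow> g = \<one>\<^bsub>BG\<^esub>"
proof -
  assume g: "g \<in> G" and fx: "\<And>a. a \<in> \<Omega> \<Longrightarrow> g a = a"
  have "g \<in> extensional \<Omega>" using memBij[OF g] by (simp add: Bij_def)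
  moreover have "\<one>\<^bsub>BG\<^esub> \<in> extensional \<Omega>" by (simp add: BijGroup_def)
  ultimately show ?thesis by (rule extensionalityI) (simp add: fx one_app)
qed

lemma finG: "finite G"
proof -
  have "G \<subseteq> \<Omega> \<rightarrow>\<^sub>E \<Omega>"
  proof
    fix g assume "g \<in> G"
    hence "g \<in> Bij \<Omega>" by (rule memBij)
    thus "g \<in> \<Omega> \<rightarrow>\<^sub>E \<Omega>" by (simp add: PiE_def Bij_imp_funcset Bij_imp_extensional)
  qed
  moreover have "finite (\<Omega> \<rightarrow>\<^sub>E \<Omega>)" using fin by (simp add: finite_PiE)
  ultimately show ?thesis by (rule finite_subset)
qed

lemma orbit_stab:
  assumes HG: "H \<subseteq> G" and Hm: "\<And>g h. g \<in> H \<Longrightarrow> h \<in> H \<Longrightarrow> g \<otimes>\<^bsub>BG\<^esub> h \<in> H"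
    and Hi: "\<And>g. g \<in> H \<Longrightarrow> inv\<^bsub>BG\<^esub> g \<in> H"
    and a: "a \<in> \<Omega>" and b: "b \<in> \<Omega>"
  shows "card H = card ((\<lambda>h. (h a, h b)) ` H) * card {h\<in>H. h a = a \<and> h b = b}"
proof -
  define f where "f = (\<lambda>h::'a\<Rightarrow>'a. (h a, h b))"
  define S where "S = {h\<in>H. h a = a \<and> h b = b}"
  define fib where "fib p = {h\<in>H. f h = p}" for p
  have finH: "finite H" using finG HG finite_subset by blast
  have fibcard: "card (fib (f h0)) = card S" if h0: "h0 \<in> H" for h0
  proof -
    have h0G: "h0 \<in> G" using h0 HG by blast
    have "fib (f h0) = (\<lambda>s. h0 \<otimes>\<^bsub>BG\<^esub> s) ` S"
    proof
      show "(\<lambda>s. h0 \<otimes>\<^bsub>BG\<^esub> s) ` S \<subseteq> fib (f h0)"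
      proof
        fix h assume "h \<in> (\<lambda>s. h0 \<otimes>\<^bsub>BG\<^esub> s) ` S"
        then obtain s where s: "s \<in> H" "s a = a" "s b = b" and hs: "h = h0 \<otimes>\<^bsub>BG\<^esub> s"
          by (auto simp: S_def)
        have sG: "s \<in> G" using s HG by blast
        show "h \<in> fib (f h0)" using hs s Hm[OF h0 s(1)] mult_app[OF h0G sG a] mult_app[OF h0G sG b]
          by (simp add: fib_def f_def)
      qed
      show "fib (f h0) \<subseteq> (\<lambda>s. h0 \<otimes>\<^bsub>BG\<^esub> s) ` S"
      proof
        fix h assume "h \<in> fib (f h0)"
        hence h: "h \<in> H" "h a = h0 a" "h b = h0 b" by (auto simp: fib_def f_def)
        have hG: "h \<in> G" using h HG by blast
        define s where "s = inv\<^bsub>BG\<^esub> h0 \<otimes>\<^bsub>BG\<^esub> h"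
        have sH: "s \<in> H" using Hm Hi h0 h by (simp add: s_def)
        have "s a = a" using mult_app[OF iclosed[OF h0G] hG a] inv_app[OF h0G a] h by (simp add: s_def)
        moreover have "s b = b" using mult_app[OF iclosed[OF h0G] hG b] inv_app[OF h0G b] h by (simp add: s_def)
        moreover have "h0 \<otimes>\<^bsub>BG\<^esub> s = h"
          using group.inv_solve_left[OF grp memB[OF HG[THEN subsetD, OF sH]] memB[OF h0G] memB[OF hG]]
          by (simp add: s_def)
        ultimately show "h \<in> (\<lambda>s. h0 \<otimes>\<^bsub>BG\<^esub> s) ` S" using sH by (auto simp: S_def)
      qed
    qed
    moreover have "inj_on (\<lambda>s. h0 \<otimes>\<^bsub>BG\<^esub> s) S"
    proof (rule inj_onI)
      fix x y assume x: "x \<in> S" and y: "y \<in> S" and eq: "h0 \<otimes>\<^bsub>BG\<^esub> x = h0 \<otimes>\<^bsub>BG\<^esub> y"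
      have xc: "x \<in> carrier BG" using x HG memB by (auto simp: S_def)
      have yc: "y \<in> carrier BG" using y HG memB by (auto simp: S_def)
      have "h0 \<in> Units BG" using group.Units_eq[OF grp] memB[OF h0G] by simp
      from monoid.Units_l_cancel[OF group.is_monoid[OF grp] this xc yc] eq show "x = y" by simp
    qed
    ultimately show ?thesis by (simp add: card_image)
  qed
  have "H = (\<Union>p\<in>f ` H. fib p)" by (auto simp: fib_def)
  moreover have "card (\<Union>p\<in>f ` H. fib p) = (\<Sum>p\<in>f ` H. card (fib p))"
  proof (rule card_UN_disjoint)
    show "finite (f ` H)" using finH by simp
    show "\<forall>i\<in>f ` H. finite (fib i)" using finH by (simp add: fib_def)
    show "\<forall>i\<in>f ` H. \<forall>j\<in>f ` H. i \<noteq> j \<longrightarrow> fib i \<inter> fib j = {}" by (auto simp: fib_def)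
  qed
  ultimately have "card H = (\<Sum>p\<in>f ` H. card (fib p))" by simp
  also have "\<dots> = (\<Sum>p\<in>f ` H. card S)" using fibcard by (intro sum.cong) auto
  finally show ?thesis by (simp add: f_def S_def)
qed


lemma orbit_sub: "\<alpha> \<in> \<Omega> \<Longrightarrow> orbit_of G \<alpha> \<subseteq> \<Omega>"
  using maps by (auto simp: orbit_of_def)

lemma orbit_self: "\<alpha> \<in> \<Omega> \<Longrightarrow> \<alpha> \<in> orbit_of G \<alpha>"
  using oneG one_app unfolding orbit_of_def by (metis image_eqI)

lemma orbit_closed: "\<alpha> \<in> \<Omega> \<Longrightarrow> x \<in> orbit_of G \<alpha> \<Longrightarrow> g \<in> G \<Longrightarrow> g x \<in> orbit_of G \<alpha>"
proof -
  assume a: "\<alpha> \<in> \<Omega>" and x: "x \<in> orbit_of G \<alpha>" and g: "g \<in> G"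
  then obtain h where h: "h \<in> G" "x = h \<alpha>" by (auto simp: orbit_of_def)
  have "g x = (g \<otimes>\<^bsub>BG\<^esub> h) \<alpha>" using mult_app[OF g h(1) a] h by simp
  thus ?thesis using mclosed[OF g h(1)] by (auto simp: orbit_of_def)
qed

lemma orbit_mem: "\<alpha> \<in> \<Omega> \<Longrightarrow> \<beta> \<in> orbit_of G \<alpha> \<Longrightarrow> orbit_of G \<beta> \<subseteq> orbit_of G \<alpha>"
  using orbit_closed by (auto simp: orbit_of_def)

lemma orbit_sym: "\<alpha> \<in> \<Omega> \<Longrightarrow> \<beta> \<in> orbit_of G \<alpha> \<Longrightarrow> \<alpha> \<in> orbit_of G \<beta>"
proof -
  assume a: "\<alpha> \<in> \<Omega>" and b: "\<beta> \<in> orbit_of G \<alpha>"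
  then obtain g where g: "g \<in> G" "\<beta> = g \<alpha>" by (auto simp: orbit_of_def)
  have "(inv\<^bsub>BG\<^esub> g) \<beta> = \<alpha>" using inv_app[OF g(1) a] g by simp
  thus ?thesis using iclosed[OF g(1)] by (auto simp: orbit_of_def)
qed

lemma orbit_eq: "\<alpha> \<in> \<Omega> \<Longrightarrow> \<beta> \<in> \<Omega> \<Longrightarrow> x \<in> orbit_of G \<alpha> \<Longrightarrow> x \<in> orbit_of G \<beta> \<Longrightarrow> orbit_of G \<alpha> = orbit_of G \<beta>"
proof -
  assume a: "\<alpha> \<in> \<Omega>" and b: "\<beta> \<in> \<Omega>" and xa: "x \<in> orbit_of G \<alpha>" and xb: "x \<in> orbit_of G \<beta>"
  have x: "x \<in> \<Omega>" using orbit_sub[OF a] xa by blast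
  show ?thesis using orbit_mem[OF a xa] orbit_mem[OF x orbit_sym[OF a xa]]
      orbit_mem[OF b xb] orbit_mem[OF x orbit_sym[OF b xb]] by blast
qed

lemma two_points: "finite D \<Longrightarrow> card D \<ge> 2 \<Longrightarrow> x \<in> D \<Longrightarrow> \<exists>y\<in>D. y \<noteq> x"
proof (rule ccontr)
  assume "finite D" "card D \<ge> 2" "x \<in> D" "\<not> (\<exists>y\<in>D. y \<noteq> x)"
  hence "D = {x}" by blast
  thus False using \<open>card D \<ge> 2\<close> by simp
qed

lemma card_offdiag: "finite D \<Longrightarrow> card {(u,v). u \<in> D \<and> v \<in> D \<and> u \<noteq> v} = card D * (card D - 1)"
proof -
  assume f: "finite D"
  have eq: "{(u,v). u \<in> D \<and> v \<in> D \<and> u \<noteq> v} = D \<times> D - (\<lambda>u. (u,u)) ` D" by auto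
  have "card ((\<lambda>u. (u,u)) ` D) = card D" by (rule card_image) (auto simp: inj_on_def)
  moreover have "(\<lambda>u. (u,u)) ` D \<subseteq> D \<times> D" by auto
  ultimately have "card (D \<times> D - (\<lambda>u. (u,u)) ` D) = card D * card D - card D"
    using f by (simp add: card_Diff_subset card_cartesian_product)
  thus ?thesis using eq by (simp add: diff_mult_distrib2)
qed

lemma part1:
  assumes Qt: "\<And>a b. a \<in> \<Omega> \<Longrightarrow> b \<in> \<Omega> \<Longrightarrow> a \<noteq> b \<Longrightarrow> card (pw_stab2 G a b) = t"
    and a0: "\<alpha> \<in> \<Omega>" and D: "D = orbit_of G \<alpha>" and tt: "two_transitive_on G D"
  shows "card G = card D * (card D - 1) * t"
proof -
  have DO: "D \<subseteq> \<Omega>" using orbit_sub[OF a0] D by simp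
  have finD: "finite D" using DO fin finite_subset by blast
  have c2: "card D \<ge> 2" and tr: "\<And>a b c d. a \<in> D \<Longrightarrow> b \<in> D \<Longrightarrow> c \<in> D \<Longrightarrow> d \<in> D \<Longrightarrow> a \<noteq> b \<Longrightarrow> c \<noteq> d
      \<Longrightarrow> \<exists>g\<in>G. g a = c \<and> g b = d" using tt by (auto simp: two_transitive_on_def)
  have x: "\<alpha> \<in> D" using orbit_self[OF a0] D by simp
  obtain y where y: "y \<in> D" "y \<noteq> \<alpha>" using two_points[OF finD c2 x] by blast
  have yO: "y \<in> \<Omega>" using y DO by blast
  have img: "(\<lambda>h. (h \<alpha>, h y)) ` G = {(u,v). u \<in> D \<and> v \<in> D \<and> u \<noteq> v}"
  proof
    show "(\<lambda>h. (h \<alpha>, h y)) ` G \<subseteq> {(u,v). u \<in> D \<and> v \<in> D \<and> u \<noteq> v}"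
      using orbit_closed[OF a0] x y D injG[OF _ a0 yO] by auto
    show "{(u,v). u \<in> D \<and> v \<in> D \<and> u \<noteq> v} \<subseteq> (\<lambda>h. (h \<alpha>, h y)) ` G"
    proof clarify
      fix u v assume "u \<in> D" "v \<in> D" "u \<noteq> v"
      then obtain g where "g \<in> G" "g \<alpha> = u" "g y = v" using tr[OF x y(1)] y by metis
      thus "(u, v) \<in> (\<lambda>h. (h \<alpha>, h y)) ` G" by force
    qed
  qed
  have "card G = card ((\<lambda>h. (h \<alpha>, h y)) ` G) * card {h\<in>G. h \<alpha> = \<alpha> \<and> h y = y}"
    by (rule orbit_stab[OF subset_refl mclosed iclosed a0 yO])
  also have "{h\<in>G. h \<alpha> = \<alpha> \<and> h y = y} = pw_stab2 G \<alpha> y" by (simp add: pw_stab2_def)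
  finally show ?thesis using img card_offdiag[OF finD] Qt[OF a0 yO] y(2) by simp
qed

lemma nn_inj: "(a::nat) \<ge> 1 \<Longrightarrow> b \<ge> 1 \<Longrightarrow> a * (a - 1) = b * (b - 1) \<Longrightarrow> a = b"
proof -
  have key: "x * (x - 1) < y * (y - 1)" if "(x::nat) \<ge> 1" "x < y" for x y
  proof -
    have "x * (x - 1) \<le> x * (y - 1)" using that by simp
    also have "\<dots> < y * (y - 1)" using that by simp
    finally show ?thesis .
  qed
  assume "a \<ge> 1" "b \<ge> 1" "a * (a - 1) = b * (b - 1)"
  thus "a = b" using key[of a b] key[of b a] by (metis less_irrefl nat_neq_iff)
qed

lemma part2:
  assumes Qt: "\<And>a b. a \<in> \<Omega> \<Longrightarrow> b \<in> \<Omega> \<Longrightarrow> a \<noteq> b \<Longrightarrow> card (pw_stab2 G a b) = t"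
    and t1: "t > 1"
    and a0: "\<alpha> \<in> \<Omega>" and D1: "D1 = orbit_of G \<alpha>" and tt1: "two_transitive_on G D1"
    and b0: "\<beta> \<in> \<Omega>" and D2: "D2 = orbit_of G \<beta>" and tt2: "two_transitive_on G D2"
    and ne: "D1 \<noteq> D2"
  shows False
proof -
  have D1O: "D1 \<subseteq> \<Omega>" using orbit_sub[OF a0] D1 by simp
  have finD1: "finite D1" using D1O fin finite_subset by blast
  have D2O: "D2 \<subseteq> \<Omega>" using orbit_sub[OF b0] D2 by simp
  have finD2: "finite D2" using D2O fin finite_subset by blast
  have c1: "card D1 \<ge> 2" and tr: "\<And>a b c d. a \<in> D1 \<Longrightarrow> b \<in> D1 \<Longrightarrow> c \<in> D1 \<Longrightarrow> d \<in> D1 \<Longrightarrow> a \<noteq> b \<Longrightarrow> c \<noteq> d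
      \<Longrightarrow> \<exists>g\<in>G. g a = c \<and> g b = d" using tt1 by (auto simp: two_transitive_on_def)
  have c2: "card D2 \<ge> 2" using tt2 by (auto simp: two_transitive_on_def)
  have "card D1 * (card D1 - 1) * t = card D2 * (card D2 - 1) * t"
    using part1[OF Qt a0 D1 tt1] part1[OF Qt b0 D2 tt2] by metis
  hence "card D1 * (card D1 - 1) = card D2 * (card D2 - 1)" using t1 by simp
  hence n12: "card D1 = card D2" using nn_inj c1 c2 by simp
  define n where "n = card D1"
  have aD1: "\<alpha> \<in> D1" using orbit_self[OF a0] D1 by simp
  have bD2: "\<beta> \<in> D2" using orbit_self[OF b0] D2 by simp
  have disj: "D1 \<inter> D2 = {}" using orbit_eq[OF a0 b0] D1 D2 ne by blast
  define Ga where "Ga = {g\<in>G. g \<alpha> = \<alpha>}"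
  have GaG: "Ga \<subseteq> G" by (auto simp: Ga_def)
  have Gam: "g \<otimes>\<^bsub>BG\<^esub> h \<in> Ga" if "g \<in> Ga" "h \<in> Ga" for g h
    using that mclosed mult_app[OF _ _ a0] by (auto simp: Ga_def)
  have Gai: "inv\<^bsub>BG\<^esub> g \<in> Ga" if "g \<in> Ga" for g
  proof -
    have gG: "g \<in> G" and ga: "g \<alpha> = \<alpha>" using that by (auto simp: Ga_def)
    have "(inv\<^bsub>BG\<^esub> g) \<alpha> = \<alpha>" using inv_app[OF gG a0] ga by simp
    thus ?thesis using iclosed[OF gG] by (simp add: Ga_def)
  qed
  have finGa: "finite Ga" using finG GaG finite_subset by blast
  obtain y where y: "y \<in> D1" "y \<noteq> \<alpha>" using two_points[OF finD1 c1 aD1] by blast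
  have yO: "y \<in> \<Omega>" using y D1O by blast
  have img1: "(\<lambda>h. (h \<alpha>, h y)) ` Ga = (\<lambda>v. (\<alpha>, v)) ` (D1 - {\<alpha>})"
  proof
    show "(\<lambda>h. (h \<alpha>, h y)) ` Ga \<subseteq> (\<lambda>v. (\<alpha>, v)) ` (D1 - {\<alpha>})"
      using orbit_closed[OF a0] y D1 injG[OF _ a0 yO] by (auto simp: Ga_def)
    show "(\<lambda>v. (\<alpha>, v)) ` (D1 - {\<alpha>}) \<subseteq> (\<lambda>h. (h \<alpha>, h y)) ` Ga"
    proof
      fix p assume "p \<in> (\<lambda>v. (\<alpha>, v)) ` (D1 - {\<alpha>})"
      then obtain v where v: "v \<in> D1" "v \<noteq> \<alpha>" and p: "p = (\<alpha>, v)" by blast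
      then obtain g where "g \<in> G" "g \<alpha> = \<alpha>" "g y = v" using tr[OF aD1 y(1)] y aD1 by metis
      thus "p \<in> (\<lambda>h. (h \<alpha>, h y)) ` Ga" using p by (force simp: Ga_def)
    qed
  qed
  have "card Ga = card ((\<lambda>h. (h \<alpha>, h y)) ` Ga) * card {h\<in>Ga. h \<alpha> = \<alpha> \<and> h y = y}"
    by (rule orbit_stab[OF GaG Gam Gai a0 yO])
  also have "{h\<in>Ga. h \<alpha> = \<alpha> \<and> h y = y} = pw_stab2 G \<alpha> y" by (auto simp: pw_stab2_def Ga_def)
  also have "card ((\<lambda>h. (h \<alpha>, h y)) ` Ga) = n - 1" unfolding img1 n_def
    by (subst card_image) (auto simp: inj_on_def finD1 aD1)
  finally have cGa: "card Ga = (n - 1) * t" using Qt[OF a0 yO] y(2) by simp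
  have orbD2: "card ((\<lambda>h. h z) ` Ga) = n - 1" "(\<lambda>h. h z) ` Ga \<subseteq> D2" if z: "z \<in> D2" for z
  proof -
    have zO: "z \<in> \<Omega>" using z D2O by blast
    have za: "\<alpha> \<noteq> z" using z aD1 disj by blast
    have im: "(\<lambda>h. (h \<alpha>, h z)) ` Ga = (\<lambda>v. (\<alpha>, v)) ` ((\<lambda>h. h z) ` Ga)" by (auto simp: Ga_def)
    have "card Ga = card ((\<lambda>h. (h \<alpha>, h z)) ` Ga) * card {h\<in>Ga. h \<alpha> = \<alpha> \<and> h z = z}"
      by (rule orbit_stab[OF GaG Gam Gai a0 zO])
    also have "{h\<in>Ga. h \<alpha> = \<alpha> \<and> h z = z} = pw_stab2 G \<alpha> z" by (auto simp: pw_stab2_def Ga_def)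
    also have "card ((\<lambda>h. (h \<alpha>, h z)) ` Ga) = card ((\<lambda>h. h z) ` Ga)" unfolding im
      by (subst card_image) (auto simp: inj_on_def)
    finally have "(n - 1) * t = card ((\<lambda>h. h z) ` Ga) * t" using Qt[OF a0 zO za] cGa by simp
    thus "card ((\<lambda>h. h z) ` Ga) = n - 1" using t1 by simp
    show "(\<lambda>h. h z) ` Ga \<subseteq> D2" using orbit_closed[OF b0] z D2 GaG by auto
  qed
  define O1 where "O1 = (\<lambda>h. h \<beta>) ` Ga"
  have "card O1 < card D2" using orbD2[OF bD2] c2 n12 by (simp add: O1_def n_def)
  hence "\<not> D2 \<subseteq> O1" using card_mono[of O1 D2] finD2 finite_subset[OF orbD2(2)[OF bD2]] O1_def
    by (meson card_mono finite_subset leD orbD2(2)[OF bD2])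
  then obtain z where z: "z \<in> D2" "z \<notin> O1" by blast
  define O2 where "O2 = (\<lambda>h. h z) ` Ga"
  have "O1 \<inter> O2 = {}"
  proof (rule ccontr)
    assume "O1 \<inter> O2 \<noteq> {}"
    then obtain g h where g: "g \<in> Ga" and h: "h \<in> Ga" and eq: "g \<beta> = h z"
      by (auto simp: O1_def O2_def)
    have zO: "z \<in> \<Omega>" using z D2O by blast
    have "(inv\<^bsub>BG\<^esub> h \<otimes>\<^bsub>BG\<^esub> g) \<beta> = z"
      using mult_app[OF iclosed _ b0, of h g] inv_app[OF _ zO, of h] g h eq GaG by auto
    hence "z \<in> O1" using Gam[OF Gai[OF h] g] by (auto simp: O1_def)
    thus False using z by simp
  qed
  moreover have "O1 \<union> O2 \<subseteq> D2" using orbD2(2)[OF bD2] orbD2(2)[OF z(1)] by (simp add: O1_def O2_def)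
  ultimately have "card O1 + card O2 \<le> card D2"
  proof -
    assume dj: "O1 \<inter> O2 = {}" and sub: "O1 \<union> O2 \<subseteq> D2"
    have f1: "finite O1" "finite O2" using sub finD2 finite_subset by blast+
    have "card (O1 \<union> O2) = card O1 + card O2" by (rule card_Un_disjoint[OF f1 dj])
    moreover have "card (O1 \<union> O2) \<le> card D2" by (rule card_mono[OF finD2 sub])
    ultimately show ?thesis by simp
  qed
  hence "n \<le> 2" using orbD2(1)[OF bD2] orbD2(1)[OF z(1)] n12 c2 by (simp add: O1_def O2_def n_def)
  hence "n = 2" using c1 by (simp add: n_def)
  hence cGa2: "card Ga = t" using cGa by simp
  have fixall: "g \<gamma> = \<gamma>" if g: "g \<in> Ga" and c: "\<gamma> \<in> \<Omega>" for g \<gamma>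
  proof (cases "\<gamma> = \<alpha>")
    case True thus ?thesis using g by (simp add: Ga_def)
  next
    case False
    have sub: "pw_stab2 G \<alpha> \<gamma> \<subseteq> Ga" by (auto simp: pw_stab2_def Ga_def)
    have "card (pw_stab2 G \<alpha> \<gamma>) = card Ga" using Qt[OF a0 c] False cGa2 by auto
    hence "pw_stab2 G \<alpha> \<gamma> = Ga" using card_subset_eq[OF finGa sub] by simp
    thus ?thesis using g by (auto simp: pw_stab2_def)
  qed
  have "Ga \<subseteq> {\<one>\<^bsub>BG\<^esub>}" using fixall extG GaG by blast
  hence "card Ga \<le> card {\<one>\<^bsub>BG\<^esub>}" by (rule card_mono[rotated]) simp
  hence "card Ga \<le> 1" by simp
  thus False using cGa2 t1 by simp
qed

end

theorem mainTheorem5: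
  fixes G :: "('a \<Rightarrow> 'a) set" and \<Omega> :: "'a set" and t :: nat
  assumes "finite \<Omega>"
    and "subgroup G (BijGroup \<Omega>)"
    and "quasi_transitive_with G \<Omega> t"
    and "\<not> transitive_on G \<Omega>"
  shows "(\<forall>\<Delta>. is_orbit G \<Omega> \<Delta> \<and> two_transitive_on G \<Delta> \<longrightarrow>
            card G = card \<Delta> * (card \<Delta> - 1) * t)
       \<and> (\<forall>\<Delta>1 \<Delta>2. is_orbit G \<Omega> \<Delta>1 \<and> two_transitive_on G \<Delta>1 \<and>
            is_orbit G \<Omega> \<Delta>2 \<and> two_transitive_on G \<Delta>2 \<longrightarrow> \<Delta>1 = \<Delta>2)"
proof -
  interpret pg G \<Omega> by (rule pg.intro[OF assms(1,2)])
  have t1: "t > 1" and Qt: "\<And>a b. a \<in> \<Omega> \<Longrightarrow> b \<in> \<Omega> \<Longrightarrow> a \<noteq> b \<Longrightarrow> card (pw_stab2 G a b) = t"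
    using assms(3) by (auto simp: quasi_transitive_with_def)
  show ?thesis
  proof (intro conjI allI impI)
    fix D assume "is_orbit G \<Omega> D \<and> two_transitive_on G D"
    then obtain \<alpha> where "\<alpha> \<in> \<Omega>" "D = orbit_of G \<alpha>" "two_transitive_on G D" by (auto simp: is_orbit_def)
    thus "card G = card D * (card D - 1) * t" using part1[OF Qt] by blast
  next
    fix D1 D2 assume h: "is_orbit G \<Omega> D1 \<and> two_transitive_on G D1 \<and> is_orbit G \<Omega> D2 \<and> two_transitive_on G D2"
    then obtain \<alpha> \<beta> where "\<alpha> \<in> \<Omega>" "D1 = orbit_of G \<alpha>" "\<beta> \<in> \<Omega>" "D2 = orbit_of G \<beta>"
      by (auto simp: is_orbit_def)
    thus "D1 = D2" using part2[OF Qt t1] h by blast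
  qed
qed

end
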